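(* Assume the setting below and that the running variable $X$ has a strictly positive density at the cutoff $0$. Let $v(x,w):=(w,\,1-w,\,xw,\,x(1-w),\,x^2)^\top$ and $A:=\mathbb{E}[v(X,W)v(X,W)^\top]$. Then there exists $\alpha\in(0,1]$ such that $u^\top A u\ge \alpha\|u\|_2^2$ for all $u\in\mathbb{R}^5$. Furthermore, for fixed $\sigma^2>0$, $B>0$, letting $\theta_n^*=(\rho_n^*,\lambda_n^* )$ be the minimizer of $L_n(\cdot\,;\sigma^2,B)$ over $\Theta(\ell)$, every $\theta=(\rho,\lambda)\in\Theta(\ell)$ satisfies $$L_n(\theta;\sigma^2,B)-L_n(\theta_n^*;\sigma^2,B)\ge\frac{1}{4\sigma^2}\mathbb{E}\big(\rho(X)-\rho_n^*(X)+\langle \lambda_{-1}-\lambda_{n,-1}^*,v(X,W)\rangle\big)^2+\frac{(\lambda_1-\lambda_{n,1}^* )^2}{4nB^2}$$ $$\ge \frac{\alpha}{4\sigma^2}\Big(\|\rho-\rho_n^*\|^2_{L^2(P)}+\|\lambda_{-1}-\lambda_{n,-1}^*\|_2^2\Big)+\frac{(\lambda_1-\lambda_{n,1}^* )^2}{4nB^2}-R_n,$$ where $R_n=\frac{1}{2\sigma^2}\mathbb{E}\big|(\rho(X)-\rho_n^*(X))\langle \lambda_{-1}-\lambda_{n,-1}^*,v(X,W)\rangle\big|$ and $P$ is the law of $X$.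
   Context: Regression discontinuity setting with cutoff normalized to $c=0$: i.i.d. pairs $(X_i,Y_i)$, $W_i=\mathbf{1}\{X_i\ge 0\}$; only observations with $|X_i|\le\ell$ are used, and $(X,W)$ denotes a generic draw of a retained running variable and its treatment indicator. For $\lambda=(\lambda_1,\dots,\lambda_6)$ write $\lambda_{-1}=(\lambda_2,\dots,\lambda_6)$. Dual parameter space: $\Theta(\ell)=\{(f,\lambda): f:[-\ell,\ell]\to\mathbb{R},\ f(0)=f'(0)=f''(0)=0,\ f''\text{ is }\lambda_1\text{-Lipschitz},\ \lambda\in[0,\infty)\times\mathbb{R}^5\}$. For $\theta=(\rho,\lambda)$ let $G(\theta;x,w)=\rho(x)+\lambda_2 w+\lambda_3(1-w)+\lambda_4 wx+\lambda_5(1-w)x+\lambda_6x^2$. Population dual loss: $L_n(\theta;\sigma^2,B)=\frac{1}{4\sigma^2}\mathbb{E}[G^2(\theta;X,W)]+\frac{\lambda_1^2}{4nB^2}+\frac{\lambda_2-\lambda_3}{n}$. *)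

theory Defs
  imports "HOL-Analysis.Analysis" "HOL-Probability.Probability"
begin

text \<open>Treatment indicator W = 1{X >= 0} (cutoff normalised to 0).\<close>
definition treat :: "real \<Rightarrow> real" where
  "treat x = (if x \<ge> 0 then 1 else 0)"

definition vfeat :: "real \<Rightarrow> real ^ 5" where
  "vfeat x = vector [treat x, 1 - treat x, x * treat x, x * (1 - treat x), x^2]"

definition Amat :: "real measure \<Rightarrow> real ^ 5 ^ 5" where
  "Amat M = (\<chi> i j. \<integral>x. vfeat x $ i * vfeat x $ j \<partial>M)"

text \<open>Dual parameters theta = (rho, lambda_1, lambda_{-1}), with
  lambda_{-1} = (lambda_2,...,lambda_6) stored as a vector in R^5.
  A function rho : [-l,l] -> R is represented extensionally (value 0 outside [-l,l]).\<close>
type_synonym dualpar = "(real \<Rightarrow> real) \<times> real \<times> (real ^ 5)"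

definition Theta :: "real \<Rightarrow> dualpar set" where
  "Theta l = {(\<rho>, lam1, \<mu>).
     (\<forall>x. x \<notin> {-l..l} \<longrightarrow> \<rho> x = 0) \<and>
     (\<exists>\<rho>1 \<rho>2. (\<forall>x\<in>{-l..l}. (\<rho> has_real_derivative \<rho>1 x) (at x within {-l..l}) \<and>
                             (\<rho>1 has_real_derivative \<rho>2 x) (at x within {-l..l})) \<and>
               \<rho> 0 = 0 \<and> \<rho>1 0 = 0 \<and> \<rho>2 0 = 0 \<and>
               lam1-lipschitz_on {-l..l} \<rho>2) \<and>
     lam1 \<ge> 0}"

definition Gfun :: "dualpar \<Rightarrow> real \<Rightarrow> real" where
  "Gfun \<theta> x = fst \<theta> x + snd (snd \<theta>) \<bullet> vfeat x"

definition Lloss :: "real measure \<Rightarrow> nat \<Rightarrow> real \<Rightarrow> real \<Rightarrow> dualpar \<Rightarrow> real" where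
  "Lloss M n s2 B \<theta> =
     1 / (4 * s2) * (\<integral>x. (Gfun \<theta> x)^2 \<partial>M)
     + (fst (snd \<theta>))^2 / (4 * real n * B^2)
     + (snd (snd \<theta>) $ 1 - snd (snd \<theta>) $ 2) / real n"

end

theory Submission
  imports Defs
begin

lemma exhaust_5:
  fixes x :: 5
  shows "x = 1 \<or> x = 2 \<or> x = 3 \<or> x = 4 \<or> x = 5"
proof (induct x)
  case (of_int z)
  then have "z = 0 \<or> z = 1 \<or> z = 2 \<or> z = 3 \<or> z = 4" by fastforce
  then show ?case by auto
qed

lemma UNIV_5: "UNIV = {1::5, 2, 3, 4, 5}"
  using exhaust_5 by auto

lemma sum_5: "sum f (UNIV::5 set) = f 1 + f 2 + f 3 + f 4 + f 5"
  unfolding UNIV_5 by (simp add: ac_simps)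

lemma vector_5 [simp]:
 "(vector [a,b,c,d,e] ::real^5)$1 = a"
 "(vector [a,b,c,d,e] ::real^5)$2 = b"
 "(vector [a,b,c,d,e] ::real^5)$3 = c"
 "(vector [a,b,c,d,e] ::real^5)$4 = d"
 "(vector [a,b,c,d,e] ::real^5)$5 = e"
  unfolding vector_def by simp_all

lemma inner_vfeat: "u \<bullet> vfeat x = u$1*treat x + u$2*(1-treat x) + u$3*(x*treat x) + u$4*(x*(1-treat x)) + u$5*x^2"
  unfolding vfeat_def inner_vec_def sum_5 by simp

lemma norm5: "(norm (u::real^5))^2 = (u$1)^2 + (u$2)^2 + (u$3)^2 + (u$4)^2 + (u$5)^2"
  unfolding power2_norm_eq_inner inner_vec_def sum_5 by (simp add: power2_eq_square)

lemma cs3: "((a::real)+b+c)^2 \<le> 3*(a^2+b^2+c^2)"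
proof -
  have "3*(a^2+b^2+c^2) - (a+b+c)^2 = (a-b)^2+(b-c)^2+(a-c)^2"
    by (simp add: power2_eq_square algebra_simps)
  moreover have "(a-b)^2+(b-c)^2+(a-c)^2 \<ge> 0" by simp
  ultimately show ?thesis by linarith
qed

lemma cs2: "((a::real)+b)^2 \<le> 2*(a^2+b^2)"
proof -
  have "2*(a^2+b^2) - (a+b)^2 = (a-b)^2"
    by (simp add: power2_eq_square algebra_simps)
  moreover have "(a-b)^2 \<ge> 0" by simp
  ultimately show ?thesis by linarith
qed

lemma qform: "(X::real)^2 + X*Y + (Y^2 + 2*X*Z)/3 + Y*Z/2 + Z^2/5 \<ge> (X^2+Y^2+Z^2)/720"
proof -
  define P where "P = X + Y/2 + Z/3"
  define R where "R = Y + Z"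
  have e: "X^2 + X*Y + (Y^2 + 2*X*Z)/3 + Y*Z/2 + Z^2/5 = P^2 + R^2/12 + Z^2/180"
    unfolding P_def R_def by (simp add: power2_eq_square field_simps)
  have X: "X = P + (-R/2) + Z/6" "Y = R + (-Z)" unfolding P_def R_def by (auto simp: field_simps)
  have h1: "X^2 \<le> 3*(P^2 + (-R/2)^2 + (Z/6)^2)"
    unfolding X(1) by (rule cs3)
  have h2: "Y^2 \<le> 2*(R^2+(-Z)^2)" unfolding X(2) by (rule cs2)
  have "X^2+Y^2+Z^2 \<le> 4*(P^2+R^2+Z^2)"
  proof -
    have eqs: "(-R/2)^2 = R^2/4" "(Z/6)^2 = Z^2/36" "(-Z)^2 = Z^2" by (simp_all add: power_divide)
    have h1': "X^2 \<le> 3*(P^2 + R^2/4 + Z^2/36)" using h1 unfolding eqs .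
    have h2': "Y^2 \<le> 2*(R^2 + Z^2)" using h2 unfolding eqs .
    have h1'': "36 * X^2 \<le> 108*P^2 + 27*R^2 + 3*Z^2" using h1' by (simp add: field_simps)
    have "P^2 \<ge> 0" "R^2 \<ge> 0" "Z^2\<ge>0" by simp_all
    then show ?thesis using h1'' h2' by argo
  qed
  moreover have "P^2 \<ge> 0" "R^2 \<ge> 0" "Z^2\<ge>0" by simp_all
  ultimately show ?thesis unfolding e by argo
qed

lemma qform_h:
  fixes a b e h :: real
  assumes h: "0 < h" "h \<le> (1::real)"
  shows "a^2*h + a*b*h^2 + (b^2+2*a*e)*h^3/3 + b*e*h^4/2 + e^2*h^5/5 \<ge> h^5/720*(a^2+b^2+e^2)"
proof -
  have q: "a^2 + a*(b*h) + ((b*h)^2 + 2*a*(e*h^2))/3 + (b*h)*(e*h^2)/2 + (e*h^2)^2/5 \<ge> (a^2+(b*h)^2+(e*h^2)^2)/720"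
    by (rule qform)
  have eq: "a^2*h + a*b*h^2 + (b^2+2*a*e)*h^3/3 + b*e*h^4/2 + e^2*h^5/5
     = h * (a^2 + a*(b*h) + ((b*h)^2 + 2*a*(e*h^2))/3 + (b*h)*(e*h^2)/2 + (e*h^2)^2/5)"
    by (simp add: power2_eq_square power3_eq_cube power4_eq_xxxx field_simps)
      (simp add: algebra_simps numeral_eq_Suc)
  have h4: "h^4 \<le> 1" using h by (simp add: power_le_one)
  have h42: "h^4 \<le> h^2" using h by (simp add: power_decreasing)
  have "h^4*(a^2+b^2+e^2) \<le> a^2+(b*h)^2+(e*h^2)^2"
  proof -
    have "h^4*a^2 \<le> a^2" using h4 by (simp add: mult_left_le_one_le)
    moreover have "h^4*b^2 \<le> (b*h)^2" using h42 by (simp add: power_mult_distrib) (metis mult.commute mult_left_mono zero_le_power2)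
    moreover have "h^4*e^2 \<le> (e*h^2)^2" by (simp add: power_mult_distrib power_mult[symmetric])
    ultimately show ?thesis by (simp add: algebra_simps)
  qed
  then have "h * (h^4*(a^2+b^2+e^2)) / 720 \<le> h * ((a^2+(b*h)^2+(e*h^2)^2)/720)"
    using h by simp
  also have "\<dots> \<le> h * (a^2 + a*(b*h) + ((b*h)^2 + 2*a*(e*h^2))/3 + (b*h)*(e*h^2)/2 + (e*h^2)^2/5)"
    using h q by (simp add: mult_left_mono)
  finally have fin: "h * (h^4*(a^2+b^2+e^2)) / 720 \<le> h * (a^2 + a*(b*h) + ((b*h)^2 + 2*a*(e*h^2))/3 + (b*h)*(e*h^2)/2 + (e*h^2)^2/5)" .
  have e5: "h^5/720*(a^2+b^2+e^2) = h * (h^4*(a^2+b^2+e^2)) / 720"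
    by (simp add: eval_nat_numeral)
  show ?thesis unfolding eq e5 by (rule fin)
qed

lemma ftc_pos:
  fixes a b e h :: real
  assumes "0 \<le> h"
  shows "integral\<^sup>L lborel (\<lambda>x. indicator {0..h} x *\<^sub>R (a+b*x+e*x^2)^2)
     = a^2*h + a*b*h^2 + (b^2+2*a*e)*h^3/3 + b*e*h^4/2 + e^2*h^5/5"
proof -
  define F where "F x = a^2*x + a*b*x^2 + (b^2+2*a*e)*x^3/3 + b*e*x^4/2 + e^2*x^5/5" for x :: real
  have "integral\<^sup>L lborel (\<lambda>x. indicator {0..h} x *\<^sub>R (a+b*x+e*x^2)^2) = F h - F 0"
  proof (rule integral_FTC_atLeastAtMost[OF assms])
    fix x :: real
    have "(F has_real_derivative (a+b*x+e*x^2)^2) (at x)"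
      unfolding F_def
      by (auto intro!: derivative_eq_intros simp: power2_eq_square power3_eq_cube power4_eq_xxxx field_simps)
    then show "(F has_vector_derivative (a+b*x+e*x^2)^2) (at x within {0..h})"
      by (simp add: has_real_derivative_iff_has_vector_derivative has_vector_derivative_at_within)
  next
    show "continuous_on {0..h} (\<lambda>x. (a+b*x+e*x^2)^2)" by (intro continuous_intros)
  qed
  then show ?thesis unfolding F_def by simp
qed

lemma ftc_neg:
  fixes a b e h :: real
  assumes "0 \<le> h"
  shows "integral\<^sup>L lborel (\<lambda>x. indicator {-h..0} x *\<^sub>R (a+b*x+e*x^2)^2)
     = a^2*h + a*(-b)*h^2 + ((-b)^2+2*a*e)*h^3/3 + (-b)*e*h^4/2 + e^2*h^5/5"
proof -
  define F where "F x = a^2*x + a*b*x^2 + (b^2+2*a*e)*x^3/3 + b*e*x^4/2 + e^2*x^5/5" for x :: real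
  have "integral\<^sup>L lborel (\<lambda>x. indicator {-h..0} x *\<^sub>R (a+b*x+e*x^2)^2) = F 0 - F (-h)"
  proof (rule integral_FTC_atLeastAtMost)
    show "-h \<le> 0" using assms by simp
    fix x :: real
    have "(F has_real_derivative (a+b*x+e*x^2)^2) (at x)"
      unfolding F_def
      by (auto intro!: derivative_eq_intros simp: power2_eq_square power3_eq_cube power4_eq_xxxx field_simps)
    then show "(F has_vector_derivative (a+b*x+e*x^2)^2) (at x within {-h..0})"
      by (simp add: has_real_derivative_iff_has_vector_derivative has_vector_derivative_at_within)
  next
    show "continuous_on {-h..0} (\<lambda>x. (a+b*x+e*x^2)^2)" by (intro continuous_intros)
  qed
  then show ?thesis unfolding F_def by (simp add: power2_eq_square power3_eq_cube power4_eq_xxxx field_simps)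
qed


definition nice :: "real \<Rightarrow> (real \<Rightarrow> real) \<Rightarrow> bool" where
  "nice l \<phi> \<longleftrightarrow> \<phi> \<in> borel_measurable borel \<and> (\<exists>K. \<forall>x. \<bar>x\<bar> \<le> l \<longrightarrow> \<bar>\<phi> x\<bar> \<le> K)"

lemma nice_add: "nice l \<phi> \<Longrightarrow> nice l \<psi> \<Longrightarrow> nice l (\<lambda>x. \<phi> x + \<psi> x)"
  unfolding nice_def
proof (elim conjE exE, intro conjI)
  fix K1 K2 assume "\<forall>x. \<bar>x\<bar> \<le> l \<longrightarrow> \<bar>\<phi> x\<bar> \<le> K1" "\<forall>x. \<bar>x\<bar> \<le> l \<longrightarrow> \<bar>\<psi> x\<bar> \<le> K2"
  then show "\<exists>K. \<forall>x. \<bar>x\<bar> \<le> l \<longrightarrow> \<bar>\<phi> x + \<psi> x\<bar> \<le> K"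
    by (intro exI[of _ "K1+K2"]) (smt (verit))
qed auto

lemma nice_mult: "nice l \<phi> \<Longrightarrow> nice l \<psi> \<Longrightarrow> nice l (\<lambda>x. \<phi> x * \<psi> x)"
  unfolding nice_def
proof (elim conjE exE, intro conjI)
  fix K1 K2 assume a: "\<forall>x. \<bar>x\<bar> \<le> l \<longrightarrow> \<bar>\<phi> x\<bar> \<le> K1" "\<forall>x. \<bar>x\<bar> \<le> l \<longrightarrow> \<bar>\<psi> x\<bar> \<le> K2"
  show "\<exists>K. \<forall>x. \<bar>x\<bar> \<le> l \<longrightarrow> \<bar>\<phi> x * \<psi> x\<bar> \<le> K"
  proof (intro exI[of _ "K1*K2"] allI impI)
    fix x assume "\<bar>x\<bar> \<le> l"
    then have "\<bar>\<phi> x\<bar> \<le> K1" "\<bar>\<psi> x\<bar> \<le> K2" using a by auto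
    then show "\<bar>\<phi> x * \<psi> x\<bar> \<le> K1*K2" unfolding abs_mult
      by (intro mult_mono) auto
  qed
qed auto

lemma nice_const: "nice l (\<lambda>x. c)"
  unfolding nice_def by auto

lemma nice_id: "nice l (\<lambda>x. x)"
  unfolding nice_def by auto

lemma nice_abs: "nice l \<phi> \<Longrightarrow> nice l (\<lambda>x. \<bar>\<phi> x\<bar>)"
  unfolding nice_def by auto

lemma nice_diff: "nice l \<phi> \<Longrightarrow> nice l \<psi> \<Longrightarrow> nice l (\<lambda>x. \<phi> x - \<psi> x)"
proof -
  assume "nice l \<phi>" "nice l \<psi>"
  then have "nice l (\<lambda>x. \<phi> x + (-1) * \<psi> x)" by (intro nice_add nice_mult nice_const)
  then show ?thesis by simp
qed

lemma nice_sq: "nice l \<phi> \<Longrightarrow> nice l (\<lambda>x. (\<phi> x)^2)"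
  unfolding power2_eq_square by (rule nice_mult)

lemma nice_treat: "nice l treat"
  unfolding nice_def treat_def by (intro conjI exI[of _ 1]) auto

lemma nice_vinner: "nice l (\<lambda>x. u \<bullet> vfeat x)"
  unfolding inner_vfeat
  by (intro nice_add nice_mult nice_const nice_id nice_treat nice_diff nice_sq)

lemma nice_vcomp: "nice l (\<lambda>x. vfeat x $ i)"
proof -
  have "vfeat x $ i = axis i 1 \<bullet> vfeat x" for x
    by (simp add: inner_axis')
  then show ?thesis using nice_vinner[of l "axis i 1"] by simp
qed

lemma nice_integrable:
  assumes prob: "prob_space (density lborel (\<lambda>x. ennreal (f x)))"
    and supp: "AE x in density lborel (\<lambda>x. ennreal (f x)). \<bar>x\<bar> \<le> l"
    and n: "nice l \<phi>"
  shows "integrable (density lborel (\<lambda>x. ennreal (f x))) \<phi>"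
proof -
  interpret prob_space "density lborel (\<lambda>x. ennreal (f x))" by (rule prob)
  obtain K where K: "\<forall>x. \<bar>x\<bar> \<le> l \<longrightarrow> \<bar>\<phi> x\<bar> \<le> K" and m: "\<phi> \<in> borel_measurable borel"
    using n unfolding nice_def by auto
  show ?thesis
  proof (rule integrable_const_bound[where B=K])
    show "AE x in density lborel (\<lambda>x. ennreal (f x)). norm (\<phi> x) \<le> K"
      using supp by (auto elim!: eventually_mono simp: K)
    show "\<phi> \<in> borel_measurable (density lborel (\<lambda>x. ennreal (f x)))"
      using m by simp
  qed
qed

lemma theta_nice:
  assumes "(\<rho>, l1, \<mu>) \<in> Theta l"
  shows "nice l \<rho>"
proof -
  from assms obtain \<rho>1 \<rho>2 where out: "\<forall>x. x \<notin> {-l..l} \<longrightarrow> \<rho> x = 0"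
    and d: "\<forall>x\<in>{-l..l}. (\<rho> has_real_derivative \<rho>1 x) (at x within {-l..l})"
    unfolding Theta_def by auto
  have cont: "continuous_on {-l..l} \<rho>"
    by (rule DERIV_continuous_on) (use d in auto)
  have eq: "\<rho> = (\<lambda>x. indicator {-l..l} x *\<^sub>R \<rho> x)"
    using out by (auto simp: fun_eq_iff indicator_def)
  have m: "\<rho> \<in> borel_measurable borel"
    by (subst eq, rule borel_measurable_continuous_on_indicator) (use cont in auto)
  obtain K where K: "\<forall>y\<in>\<rho> ` {-l..l}. norm y \<le> K"
    using compact_imp_bounded[OF compact_continuous_image[OF cont compact_Icc]]
    unfolding bounded_iff by auto
  have "\<forall>x. \<bar>x\<bar> \<le> l \<longrightarrow> \<bar>\<rho> x\<bar> \<le> K"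
    using K by (force simp: abs_le_iff)
  then show ?thesis unfolding nice_def using m by auto
qed

lemma quad_Amat:
  assumes "\<And>i j. integrable M (\<lambda>x. vfeat x $ i * vfeat x $ j)"
  shows "u \<bullet> (Amat M *v u) = (\<integral>x. (u \<bullet> vfeat x)^2 \<partial>M)"
proof -
  have "(\<integral>x. (u \<bullet> vfeat x)^2 \<partial>M) = (\<integral>x. (\<Sum>i\<in>UNIV. \<Sum>j\<in>UNIV. u$i*u$j*(vfeat x $ i * vfeat x $ j)) \<partial>M)"
    by (rule Bochner_Integration.integral_cong)
       (simp_all add: inner_vec_def power2_eq_square sum_product mult_ac)
  also have "\<dots> = (\<Sum>i\<in>UNIV. \<Sum>j\<in>UNIV. u$i*u$j*(\<integral>x. vfeat x $ i * vfeat x $ j \<partial>M))"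
    using assms by (simp add: integral_sum integrable_sum)
  also have "\<dots> = u \<bullet> (Amat M *v u)"
    by (simp add: inner_vec_def matrix_vector_mult_def Amat_def sum_distrib_left mult_ac)
  finally show ?thesis by simp
qed


lemma pos_def:
  fixes f :: "real \<Rightarrow> real"
  assumes prob: "prob_space (density lborel (\<lambda>x. ennreal (f x)))"
    and supp: "AE x in density lborel (\<lambda>x. ennreal (f x)). \<bar>x\<bar> \<le> l"
    and f_meas: "f \<in> borel_measurable borel"
    and f_nonneg: "\<And>x. f x \<ge> 0"
    and \<delta>: "\<delta> > 0" and c: "c > 0" and fc: "\<forall>x. \<bar>x\<bar> < \<delta> \<longrightarrow> f x \<ge> c"
  shows "\<exists>\<alpha>. 0 < \<alpha> \<and> \<alpha> \<le> 1 \<and>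
    (\<forall>u :: real ^ 5. u \<bullet> (Amat (density lborel (\<lambda>x. ennreal (f x))) *v u) \<ge> \<alpha> * (norm u)^2)"
proof -
  define M where "M = density lborel (\<lambda>x. ennreal (f x))"
  define h where "h = min (\<delta>/2) 1"
  have h: "0 < h" "h \<le> 1" "h < \<delta>" using \<delta> unfolding h_def by auto
  define \<alpha> where "\<alpha> = min 1 (c*h^5/720)"
  have \<alpha>: "0 < \<alpha>" "\<alpha> \<le> 1" "\<alpha> \<le> c*h^5/720" using h c unfolding \<alpha>_def by auto
  have main: "u \<bullet> (Amat M *v u) \<ge> \<alpha> * (norm u)^2" for u :: "real^5"
  proof -
    define g where "g x = (u \<bullet> vfeat x)^2" for x
    define P where "P x = (u$1 + u$3*x + u$5*x^2)^2" for x :: real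
    define Q where "Q x = (u$2 + u$4*x + u$5*x^2)^2" for x :: real
    define R where "R x = c * (indicator {0..h} x *\<^sub>R P x + indicator {-h..0} x *\<^sub>R Q x)" for x :: real
    have "continuous_on {0..h} P" unfolding P_def by (intro continuous_intros)
    from borel_integrable_atLeastAtMost'[OF this]
    have i1: "integrable lborel (\<lambda>x. indicator {0..h} x *\<^sub>R P x)"
      unfolding set_integrable_def .
    have "continuous_on {-h..0} Q" unfolding Q_def by (intro continuous_intros)
    from borel_integrable_atLeastAtMost'[OF this]
    have i2: "integrable lborel (\<lambda>x. indicator {-h..0} x *\<^sub>R Q x)"
      unfolding set_integrable_def .
    have gm: "g \<in> borel_measurable borel"
      using nice_sq[OF nice_vinner[of l u]] unfolding nice_def g_def by auto
    have intM: "integrable M g"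
      unfolding M_def g_def by (rule nice_integrable[OF prob supp nice_sq[OF nice_vinner]])
    have "u \<bullet> (Amat M *v u) = (\<integral>x. g x \<partial>M)"
      unfolding g_def M_def
      by (rule quad_Amat, rule nice_integrable[OF prob supp], intro nice_mult nice_vcomp)
    also have "\<dots> = (\<integral>x. f x *\<^sub>R g x \<partial>lborel)"
      unfolding M_def by (rule integral_density) (use gm f_meas f_nonneg in auto)
    also have "\<dots> \<ge> (\<integral>x. R x \<partial>lborel)"
    proof (rule integral_mono_AE)
      show "integrable lborel (\<lambda>x. f x *\<^sub>R g x)"
        using intM unfolding M_def
        by (subst (asm) integrable_density) (use gm f_meas f_nonneg in auto)
      show "integrable lborel R" unfolding R_def
        using Bochner_Integration.integrable_add[OF i1 i2] by (rule integrable_mult_right)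
      show "AE x in lborel. R x \<le> f x *\<^sub>R g x"
        using AE_lborel_singleton[of 0]
      proof (rule eventually_mono)
        fix x :: real assume x0: "x \<noteq> 0"
        show "R x \<le> f x *\<^sub>R g x"
        proof (cases "x \<in> {0..h}")
          case True
          then have "0 < x" "x < \<delta>" using x0 h by auto
          then have fx: "f x \<ge> c" and gx: "g x = P x"
            using fc by (auto simp: g_def P_def inner_vfeat treat_def)
          have "R x = c * P x" using True x0 unfolding R_def by auto
          also have "\<dots> \<le> f x * P x" using fx by (rule mult_right_mono) (simp add: P_def)
          finally show ?thesis using gx by simp
        next
          case False
          show ?thesis
          proof (cases "x \<in> {-h..0}")
            case True
            then have "x < 0" "-x < \<delta>" using x0 h by auto
            then have fx: "f x \<ge> c" and gx: "g x = Q x"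
              using fc by (auto simp: g_def Q_def inner_vfeat treat_def)
            have "R x = c * Q x" using True False unfolding R_def by auto
            also have "\<dots> \<le> f x * Q x" using fx by (rule mult_right_mono) (simp add: Q_def)
            finally show ?thesis using gx by simp
          next
            case False2: False
            then have "R x = 0" using False unfolding R_def by auto
            then show ?thesis using f_nonneg[of x] by (simp add: g_def)
          qed
        qed
      qed
    qed
    finally have ge: "u \<bullet> (Amat M *v u) \<ge> (\<integral>x. R x \<partial>lborel)" .
    have "(\<integral>x. R x \<partial>lborel) = c * ((\<integral>x. indicator {0..h} x *\<^sub>R P x \<partial>lborel) + (\<integral>x. indicator {-h..0} x *\<^sub>R Q x \<partial>lborel))"
    proof -
      show ?thesis unfolding R_def using i1 i2 by simp
    qed
    also have "\<dots> \<ge> c * (h^5/720*((u$1)^2+(u$3)^2+(u$5)^2) + h^5/720*((u$2)^2+(-u$4)^2+(u$5)^2))"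
    proof -
      have "(\<integral>x. indicator {0..h} x *\<^sub>R P x \<partial>lborel) \<ge> h^5/720*((u$1)^2+(u$3)^2+(u$5)^2)"
        unfolding P_def ftc_pos[OF less_imp_le[OF h(1)]] by (rule qform_h[OF h(1,2)])
      moreover have "(\<integral>x. indicator {-h..0} x *\<^sub>R Q x \<partial>lborel) \<ge> h^5/720*((u$2)^2+(-u$4)^2+(u$5)^2)"
        unfolding Q_def ftc_neg[OF less_imp_le[OF h(1)]] by (rule qform_h[OF h(1,2)])
      ultimately show ?thesis using c by (intro mult_left_mono add_mono) auto
    qed
    finally have "u \<bullet> (Amat M *v u) \<ge> c * (h^5/720*((u$1)^2+(u$3)^2+(u$5)^2) + h^5/720*((u$2)^2+(-u$4)^2+(u$5)^2))"
      using ge by linarith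
    moreover have "c * (h^5/720*((u$1)^2+(u$3)^2+(u$5)^2) + h^5/720*((u$2)^2+(-u$4)^2+(u$5)^2))
        \<ge> (c*h^5/720) * (norm u)^2"
      unfolding norm5 using c h by (simp add: field_simps)
    moreover have "(c*h^5/720) * (norm u)^2 \<ge> \<alpha> * (norm u)^2"
      using \<alpha> by (intro mult_right_mono) auto
    ultimately show ?thesis by linarith
  qed
  show ?thesis using \<alpha> main unfolding M_def by auto
qed


lemma theta_convex:
  assumes A: "(\<rho>s, lams, \<mu>s) \<in> Theta l" and B: "(\<rho>, lam1, \<mu>) \<in> Theta l"
    and t: "0 \<le> t" "t \<le> 1"
  shows "((\<lambda>x. \<rho>s x + t * (\<rho> x - \<rho>s x)), lams + t * (lam1 - lams), \<mu>s + t *\<^sub>R (\<mu> - \<mu>s)) \<in> Theta l"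
proof -
  from A obtain a1 a2 where Ao: "\<forall>x. x \<notin> {-l..l} \<longrightarrow> \<rho>s x = 0"
    and Ad: "\<forall>x\<in>{-l..l}. (\<rho>s has_real_derivative a1 x) (at x within {-l..l}) \<and>
                             (a1 has_real_derivative a2 x) (at x within {-l..l})"
    and A0: "\<rho>s 0 = 0" "a1 0 = 0" "a2 0 = 0" and AL: "lams-lipschitz_on {-l..l} a2" and Al: "lams \<ge> 0"
    unfolding Theta_def by auto
  from B obtain b1 b2 where Bo: "\<forall>x. x \<notin> {-l..l} \<longrightarrow> \<rho> x = 0"
    and Bd: "\<forall>x\<in>{-l..l}. (\<rho> has_real_derivative b1 x) (at x within {-l..l}) \<and>
                             (b1 has_real_derivative b2 x) (at x within {-l..l})"
    and B0: "\<rho> 0 = 0" "b1 0 = 0" "b2 0 = 0" and BL: "lam1-lipschitz_on {-l..l} b2" and Bl: "lam1 \<ge> 0"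
    unfolding Theta_def by auto
  define c1 where "c1 x = a1 x + t * (b1 x - a1 x)" for x
  define c2 where "c2 x = a2 x + t * (b2 x - a2 x)" for x
  have d: "\<forall>x\<in>{-l..l}. ((\<lambda>x. \<rho>s x + t * (\<rho> x - \<rho>s x)) has_real_derivative c1 x) (at x within {-l..l}) \<and>
                             (c1 has_real_derivative c2 x) (at x within {-l..l})"
  proof
    fix x assume x: "x \<in> {-l..l}"
    show "((\<lambda>x. \<rho>s x + t * (\<rho> x - \<rho>s x)) has_real_derivative c1 x) (at x within {-l..l}) \<and>
                             (c1 has_real_derivative c2 x) (at x within {-l..l})"
      unfolding c1_def c2_def using Ad Bd x
      by (auto intro!: derivative_eq_intros)
  qed
  have L: "(lams + t * (lam1 - lams))-lipschitz_on {-l..l} c2"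
  proof (rule lipschitz_onI)
    fix x y assume xy: "x \<in> {-l..l}" "y \<in> {-l..l}"
    have 1: "\<bar>a2 x - a2 y\<bar> \<le> lams * \<bar>x - y\<bar>"
      using lipschitz_onD[OF AL xy] by (simp add: dist_real_def)
    have 2: "\<bar>b2 x - b2 y\<bar> \<le> lam1 * \<bar>x - y\<bar>"
      using lipschitz_onD[OF BL xy] by (simp add: dist_real_def)
    have "c2 x - c2 y = (1-t) * (a2 x - a2 y) + t * (b2 x - b2 y)"
      unfolding c2_def by (simp add: algebra_simps)
    then have "\<bar>c2 x - c2 y\<bar> \<le> \<bar>(1-t) * (a2 x - a2 y)\<bar> + \<bar>t * (b2 x - b2 y)\<bar>"
      by (simp only: abs_triangle_ineq)
    also have "\<dots> = (1-t) * \<bar>a2 x - a2 y\<bar> + t * \<bar>b2 x - b2 y\<bar>"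
      using t by (simp add: abs_mult)
    also have "\<dots> \<le> (1-t) * (lams * \<bar>x - y\<bar>) + t * (lam1 * \<bar>x - y\<bar>)"
      using t 1 2 by (intro add_mono mult_left_mono) auto
    finally show "dist (c2 x) (c2 y) \<le> (lams + t * (lam1 - lams)) * dist x y"
      by (simp add: dist_real_def algebra_simps)
  next
    have "lams + t * (lam1 - lams) = (1-t)*lams + t*lam1" by (simp add: algebra_simps)
    moreover have "(1-t)*lams \<ge> 0" "t*lam1 \<ge> 0" using t Al Bl by simp_all
    ultimately show "0 \<le> lams + t * (lam1 - lams)" by linarith
  qed
  have lnn: "0 \<le> lams + t * (lam1 - lams)" using L by (simp add: lipschitz_on_def)
  show ?thesis unfolding Theta_def mem_Collect_eq prod.case
  proof (intro conjI)
    show "\<forall>x. x \<notin> {-l..l} \<longrightarrow> \<rho>s x + t * (\<rho> x - \<rho>s x) = 0" using Ao Bo by simp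
    show "\<exists>\<rho>1 \<rho>2. (\<forall>x\<in>{-l..l}. ((\<lambda>x. \<rho>s x + t * (\<rho> x - \<rho>s x)) has_real_derivative \<rho>1 x) (at x within {-l..l}) \<and>
                             (\<rho>1 has_real_derivative \<rho>2 x) (at x within {-l..l})) \<and>
               \<rho>s 0 + t * (\<rho> 0 - \<rho>s 0) = 0 \<and> \<rho>1 0 = 0 \<and> \<rho>2 0 = 0 \<and>
               (lams + t * (lam1 - lams))-lipschitz_on {-l..l} \<rho>2"
      by (intro exI[of _ c1] exI[of _ c2] conjI d L) (simp_all add: c1_def c2_def A0 B0)
  qed (rule lnn)
qed


lemma lin_quad:
  fixes D Q :: real
  assumes Q: "Q \<ge> 0" and H: "\<And>t. 0 < t \<Longrightarrow> t \<le> 1 \<Longrightarrow> t*D + t^2*Q \<ge> 0"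
  shows "D \<ge> 0"
proof (rule ccontr)
  assume D: "\<not> D \<ge> 0"
  show False
  proof (cases "Q = 0")
    case True
    then show False using H[of 1] D by simp
  next
    case False
    then have Qp: "Q > 0" using Q by simp
    define t where "t = min 1 (-D/(2*Q))"
    have t: "0 < t" "t \<le> 1" "t*Q \<le> -D/2" using D Qp unfolding t_def
      by (auto simp: min_def field_simps)
    have "t*D + t^2*Q = t*(D + t*Q)" by (simp add: power2_eq_square algebra_simps)
    also have "\<dots> < 0" using t D by (intro mult_pos_neg) auto
    finally show False using H[OF t(1,2)] by simp
  qed
qed

theorem lemma4:
  fixes l :: real and f :: "real \<Rightarrow> real"
  assumes l_pos: "l > 0"
    and f_meas: "f \<in> borel_measurable borel"
    and f_nonneg: "\<And>x. f x \<ge> 0"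
    and prob: "prob_space (density lborel (\<lambda>x. ennreal (f x)))"
    and supp: "AE x in density lborel (\<lambda>x. ennreal (f x)). \<bar>x\<bar> \<le> l"
    and pos_at_0: "\<exists>\<delta>>0. \<exists>c>0. \<forall>x. \<bar>x\<bar> < \<delta> \<longrightarrow> f x \<ge> c"
  defines "M \<equiv> density lborel (\<lambda>x. ennreal (f x))"
  shows "\<exists>\<alpha>. 0 < \<alpha> \<and> \<alpha> \<le> 1 \<and>
    (\<forall>u :: real ^ 5. u \<bullet> (Amat M *v u) \<ge> \<alpha> * (norm u)^2) \<and>
    (\<forall>(s2::real) (B::real) (n::nat) \<rho>s lams \<mu>s.
       s2 > 0 \<longrightarrow> B > 0 \<longrightarrow> n > 0 \<longrightarrow>
       (\<rho>s, lams, \<mu>s) \<in> Theta l \<longrightarrow>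
       (\<forall>\<theta>\<in>Theta l. Lloss M n s2 B (\<rho>s, lams, \<mu>s) \<le> Lloss M n s2 B \<theta>) \<longrightarrow>
       (\<forall>\<rho> lam1 \<mu>. (\<rho>, lam1, \<mu>) \<in> Theta l \<longrightarrow>
          Lloss M n s2 B (\<rho>, lam1, \<mu>) - Lloss M n s2 B (\<rho>s, lams, \<mu>s)
            \<ge> 1 / (4 * s2) * (\<integral>x. (\<rho> x - \<rho>s x + (\<mu> - \<mu>s) \<bullet> vfeat x)^2 \<partial>M)
              + (lam1 - lams)^2 / (4 * real n * B^2)
          \<and>
          1 / (4 * s2) * (\<integral>x. (\<rho> x - \<rho>s x + (\<mu> - \<mu>s) \<bullet> vfeat x)^2 \<partial>M)
              + (lam1 - lams)^2 / (4 * real n * B^2)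
            \<ge> \<alpha> / (4 * s2) * ((\<integral>x. (\<rho> x - \<rho>s x)^2 \<partial>M) + (norm (\<mu> - \<mu>s))^2)
              + (lam1 - lams)^2 / (4 * real n * B^2)
              - 1 / (2 * s2) * (\<integral>x. \<bar>(\<rho> x - \<rho>s x) * ((\<mu> - \<mu>s) \<bullet> vfeat x)\<bar> \<partial>M)))"
proof -
  obtain \<delta> c where \<delta>: "\<delta> > 0" and c: "c > 0" and fc: "\<forall>x. \<bar>x\<bar> < \<delta> \<longrightarrow> f x \<ge> c"
    using pos_at_0 by blast
  obtain \<alpha> where \<alpha>: "0 < \<alpha>" "\<alpha> \<le> 1" and Apos: "\<forall>u :: real ^ 5. u \<bullet> (Amat M *v u) \<ge> \<alpha> * (norm u)^2"
    using pos_def[OF prob supp f_meas f_nonneg \<delta> c fc] unfolding M_def by blast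
  have intg: "\<And>\<phi>. nice l \<phi> \<Longrightarrow> integrable M \<phi>"
    unfolding M_def by (rule nice_integrable[OF prob supp])
  have rest: "\<forall>(s2::real) (B::real) (n::nat) \<rho>s lams \<mu>s.
       s2 > 0 \<longrightarrow> B > 0 \<longrightarrow> n > 0 \<longrightarrow>
       (\<rho>s, lams, \<mu>s) \<in> Theta l \<longrightarrow>
       (\<forall>\<theta>\<in>Theta l. Lloss M n s2 B (\<rho>s, lams, \<mu>s) \<le> Lloss M n s2 B \<theta>) \<longrightarrow>
       (\<forall>\<rho> lam1 \<mu>. (\<rho>, lam1, \<mu>) \<in> Theta l \<longrightarrow>
          Lloss M n s2 B (\<rho>, lam1, \<mu>) - Lloss M n s2 B (\<rho>s, lams, \<mu>s)
            \<ge> 1 / (4 * s2) * (\<integral>x. (\<rho> x - \<rho>s x + (\<mu> - \<mu>s) \<bullet> vfeat x)^2 \<partial>M)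
              + (lam1 - lams)^2 / (4 * real n * B^2)
          \<and>
          1 / (4 * s2) * (\<integral>x. (\<rho> x - \<rho>s x + (\<mu> - \<mu>s) \<bullet> vfeat x)^2 \<partial>M)
              + (lam1 - lams)^2 / (4 * real n * B^2)
            \<ge> \<alpha> / (4 * s2) * ((\<integral>x. (\<rho> x - \<rho>s x)^2 \<partial>M) + (norm (\<mu> - \<mu>s))^2)
              + (lam1 - lams)^2 / (4 * real n * B^2)
              - 1 / (2 * s2) * (\<integral>x. \<bar>(\<rho> x - \<rho>s x) * ((\<mu> - \<mu>s) \<bullet> vfeat x)\<bar> \<partial>M))"
  proof (intro allI impI)
    fix s2 B :: real and n :: nat and \<rho>s :: "real \<Rightarrow> real" and lams :: real and \<mu>s :: "real^5"
      and \<rho> :: "real \<Rightarrow> real" and lam1 :: real and \<mu> :: "real^5"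
    assume s2: "s2 > 0" and B: "B > 0" and n: "n > 0" and Ts: "(\<rho>s, lams, \<mu>s) \<in> Theta l"
      and min: "\<forall>\<theta>\<in>Theta l. Lloss M n s2 B (\<rho>s, lams, \<mu>s) \<le> Lloss M n s2 B \<theta>"
      and T: "(\<rho>, lam1, \<mu>) \<in> Theta l"
    define a where "a x = \<rho>s x + \<mu>s \<bullet> vfeat x" for x
    define b where "b x = \<rho> x - \<rho>s x + (\<mu> - \<mu>s) \<bullet> vfeat x" for x
    have na: "nice l a" unfolding a_def by (intro nice_add theta_nice[OF Ts] nice_vinner)
    have nb: "nice l b" unfolding b_def by (intro nice_add nice_diff theta_nice[OF Ts] theta_nice[OF T] nice_vinner)
    define IA where "IA = (\<integral>x. (a x)^2 \<partial>M)"
    define IAB where "IAB = (\<integral>x. a x * b x \<partial>M)"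
    define IB where "IB = (\<integral>x. (b x)^2 \<partial>M)"
    have Lform: "Lloss M n s2 B (r, L, m) = 1/(4 * s2)*(IA + 2*t*IAB + t^2*IB) + L^2/(4*real n*B^2) + (m$1 - m$2)/real n"
      if G: "\<And>x. Gfun (r, L, m) x = a x + t * b x" for r L m t
    proof -
      have "(\<integral>x. (Gfun (r, L, m) x)^2 \<partial>M) = (\<integral>x. (a x)^2 + (2*t) * (a x * b x) + t^2 * (b x)^2 \<partial>M)"
        by (rule Bochner_Integration.integral_cong) (simp_all add: G power2_eq_square algebra_simps)
      also have "\<dots> = IA + 2*t*IAB + t^2*IB"
        unfolding IA_def IAB_def IB_def
        using intg[OF nice_sq[OF na]] intg[OF nice_mult[OF na nb]] intg[OF nice_sq[OF nb]]
        by (simp add: Bochner_Integration.integral_add)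
      finally show ?thesis unfolding Lloss_def by simp
    qed
    have L0: "Lloss M n s2 B (\<rho>s, lams, \<mu>s) = 1/(4 * s2)*(IA + 2*0*IAB + 0^2*IB) + lams^2/(4*real n*B^2) + (\<mu>s$1 - \<mu>s$2)/real n"
      by (rule Lform) (simp add: Gfun_def a_def)
    have L1: "Lloss M n s2 B (\<rho>, lam1, \<mu>) = 1/(4 * s2)*(IA + 2*1*IAB + 1^2*IB) + lam1^2/(4*real n*B^2) + (\<mu>$1 - \<mu>$2)/real n"
      by (rule Lform) (simp add: Gfun_def a_def b_def inner_diff_left)
    define D where "D = 1/(4 * s2)*(2*IAB) + 2*lams*(lam1-lams)/(4*real n*B^2) + ((\<mu>$1-\<mu>s$1) - (\<mu>$2-\<mu>s$2))/real n"
    define Q where "Q = 1/(4 * s2)*IB + (lam1-lams)^2/(4*real n*B^2)"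
    have IBnn: "IB \<ge> 0" unfolding IB_def by (rule integral_nonneg_AE) simp
    have Qnn: "Q \<ge> 0" unfolding Q_def using IBnn s2 by simp
    have Dnn: "D \<ge> 0"
    proof (rule lin_quad[OF Qnn])
      fix t :: real assume t: "0 < t" "t \<le> 1"
      have Lt: "Lloss M n s2 B ((\<lambda>x. \<rho>s x + t * (\<rho> x - \<rho>s x)), lams + t * (lam1 - lams), \<mu>s + t *\<^sub>R (\<mu> - \<mu>s))
        = 1/(4 * s2)*(IA + 2*t*IAB + t^2*IB) + (lams + t * (lam1 - lams))^2/(4*real n*B^2)
          + ((\<mu>s + t *\<^sub>R (\<mu> - \<mu>s))$1 - (\<mu>s + t *\<^sub>R (\<mu> - \<mu>s))$2)/real n"
        by (rule Lform) (simp add: Gfun_def a_def b_def inner_diff_left inner_add_left algebra_simps)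
      have "Lloss M n s2 B (\<rho>s, lams, \<mu>s) \<le> Lloss M n s2 B ((\<lambda>x. \<rho>s x + t * (\<rho> x - \<rho>s x)), lams + t * (lam1 - lams), \<mu>s + t *\<^sub>R (\<mu> - \<mu>s))"
        using min theta_convex[OF Ts T, of t] t by auto
      moreover have "Lloss M n s2 B ((\<lambda>x. \<rho>s x + t * (\<rho> x - \<rho>s x)), lams + t * (lam1 - lams), \<mu>s + t *\<^sub>R (\<mu> - \<mu>s))
          - Lloss M n s2 B (\<rho>s, lams, \<mu>s) = t*D + t^2*Q"
        unfolding Lt L0 D_def Q_def using s2 B n
        by (simp add: field_simps power2_eq_square)
      ultimately show "t*D + t^2*Q \<ge> 0" by linarith
    qed
    have diff1: "Lloss M n s2 B (\<rho>, lam1, \<mu>) - Lloss M n s2 B (\<rho>s, lams, \<mu>s) = D + Q"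
      unfolding L1 L0 D_def Q_def using s2 B n
      by (simp add: field_simps power2_eq_square)
    have part1: "Lloss M n s2 B (\<rho>, lam1, \<mu>) - Lloss M n s2 B (\<rho>s, lams, \<mu>s) \<ge> Q"
      using diff1 Dnn by linarith
    have ndr: "nice l (\<lambda>x. \<rho> x - \<rho>s x)" by (intro nice_diff theta_nice[OF Ts] theta_nice[OF T])
    have nw: "nice l (\<lambda>x. (\<mu> - \<mu>s) \<bullet> vfeat x)" by (rule nice_vinner)
    have IBsplit: "IB = (\<integral>x. (\<rho> x - \<rho>s x)^2 \<partial>M) + 2 * (\<integral>x. (\<rho> x - \<rho>s x) * ((\<mu> - \<mu>s) \<bullet> vfeat x) \<partial>M)
        + (\<integral>x. ((\<mu> - \<mu>s) \<bullet> vfeat x)^2 \<partial>M)"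
    proof -
      have e: "IB = (\<integral>x. (\<rho> x - \<rho>s x)^2 + 2 * ((\<rho> x - \<rho>s x) * ((\<mu> - \<mu>s) \<bullet> vfeat x)) + ((\<mu> - \<mu>s) \<bullet> vfeat x)^2 \<partial>M)"
        unfolding IB_def b_def
        by (rule Bochner_Integration.integral_cong) (simp_all add: power2_eq_square algebra_simps)
      show ?thesis
        unfolding e
        using intg[OF nice_sq[OF ndr]] intg[OF nice_mult[OF ndr nw]] intg[OF nice_sq[OF nw]]
        by (simp add: Bochner_Integration.integral_add)
    qed
    have Iw: "(\<integral>x. ((\<mu> - \<mu>s) \<bullet> vfeat x)^2 \<partial>M) \<ge> \<alpha> * (norm (\<mu> - \<mu>s))^2"
      using Apos quad_Amat[of M "\<mu> - \<mu>s"] intg[OF nice_mult[OF nice_vcomp nice_vcomp]] by metis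
    have Icross: "(\<integral>x. (\<rho> x - \<rho>s x) * ((\<mu> - \<mu>s) \<bullet> vfeat x) \<partial>M) \<ge> - (\<integral>x. \<bar>(\<rho> x - \<rho>s x) * ((\<mu> - \<mu>s) \<bullet> vfeat x)\<bar> \<partial>M)"
    proof -
      have "(\<integral>x. - \<bar>(\<rho> x - \<rho>s x) * ((\<mu> - \<mu>s) \<bullet> vfeat x)\<bar> \<partial>M) \<le> (\<integral>x. (\<rho> x - \<rho>s x) * ((\<mu> - \<mu>s) \<bullet> vfeat x) \<partial>M)"
        using intg[OF nice_mult[OF ndr nw]] intg[OF nice_abs[OF nice_mult[OF ndr nw]]]
        by (intro integral_mono) auto
      then show ?thesis by simp
    qed
    have Idr: "(\<integral>x. (\<rho> x - \<rho>s x)^2 \<partial>M) \<ge> \<alpha> * (\<integral>x. (\<rho> x - \<rho>s x)^2 \<partial>M)"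
    proof -
      have "(\<integral>x. (\<rho> x - \<rho>s x)^2 \<partial>M) \<ge> 0" by (rule integral_nonneg_AE) simp
      then show ?thesis using \<alpha> by (simp add: mult_left_le_one_le)
    qed
    have IBge: "IB \<ge> \<alpha> * ((\<integral>x. (\<rho> x - \<rho>s x)^2 \<partial>M) + (norm (\<mu> - \<mu>s))^2)
        - 2 * (\<integral>x. \<bar>(\<rho> x - \<rho>s x) * ((\<mu> - \<mu>s) \<bullet> vfeat x)\<bar> \<partial>M)"
      unfolding IBsplit using Iw Icross Idr by (simp add: algebra_simps)
    have part2: "1 / (4 * s2) * IB \<ge> \<alpha> / (4 * s2) * ((\<integral>x. (\<rho> x - \<rho>s x)^2 \<partial>M) + (norm (\<mu> - \<mu>s))^2)
        - 1 / (2 * s2) * (\<integral>x. \<bar>(\<rho> x - \<rho>s x) * ((\<mu> - \<mu>s) \<bullet> vfeat x)\<bar> \<partial>M)"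
    proof -
      have "1 / (4 * s2) * IB \<ge> 1 / (4 * s2) * (\<alpha> * ((\<integral>x. (\<rho> x - \<rho>s x)^2 \<partial>M) + (norm (\<mu> - \<mu>s))^2)
        - 2 * (\<integral>x. \<bar>(\<rho> x - \<rho>s x) * ((\<mu> - \<mu>s) \<bullet> vfeat x)\<bar> \<partial>M))"
        using IBge s2 by (intro mult_left_mono) auto
      moreover have eq: "\<And>Z Y. 1/(4 * s2)*(\<alpha>*Z - 2*Y) = \<alpha>/(4 * s2)*Z - 1/(2 * s2)*Y"
        using s2 by (simp add: field_simps)
      ultimately show ?thesis by (simp only: eq)
    qed
    show "Lloss M n s2 B (\<rho>, lam1, \<mu>) - Lloss M n s2 B (\<rho>s, lams, \<mu>s)
            \<ge> 1 / (4 * s2) * (\<integral>x. (\<rho> x - \<rho>s x + (\<mu> - \<mu>s) \<bullet> vfeat x)^2 \<partial>M)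
              + (lam1 - lams)^2 / (4 * real n * B^2)
          \<and>
          1 / (4 * s2) * (\<integral>x. (\<rho> x - \<rho>s x + (\<mu> - \<mu>s) \<bullet> vfeat x)^2 \<partial>M)
              + (lam1 - lams)^2 / (4 * real n * B^2)
            \<ge> \<alpha> / (4 * s2) * ((\<integral>x. (\<rho> x - \<rho>s x)^2 \<partial>M) + (norm (\<mu> - \<mu>s))^2)
              + (lam1 - lams)^2 / (4 * real n * B^2)
              - 1 / (2 * s2) * (\<integral>x. \<bar>(\<rho> x - \<rho>s x) * ((\<mu> - \<mu>s) \<bullet> vfeat x)\<bar> \<partial>M)"
      using part1 part2 unfolding Q_def IB_def b_def by linarith
  qed
  show ?thesis using \<alpha> Apos rest by blast
qed

end
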